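(* (i) For every integer $k\ge 1$, the vector $(2,4,k,1)$ is not 0-realizable. (ii) The vector $(2,5,2,1)$ is not 0-realizable.
   Context: All graphs are finite, nonempty, and reflexive (every vertex has a loop). $N[v]$ is the closed neighborhood of $v$ (including $v$). For distinct $v,w$, $w$ strictly corners $v$ if $N[v]\subsetneq N[w]$; $v$ is then a strict corner. A vertex dominates a set if adjacent to all its vertices. Corner ranking: set $G^{(1)}=G$, $k=1$. If $G^{(k)}$ is a clique, give all its vertices rank $k$ and stop. Else if $G^{(k)}$ has no strict corners, give all its vertices rank $\infty$ and stop. Else give every strict corner of $G^{(k)}$ rank $k$, delete them to get $G^{(k+1)}$ (induced subgraph), increase $k$ and repeat. The corner rank of $G$ is the largest rank of a vertex; $X_k$ is the set of rank-$k$ vertices. A graph is cop-win iff its corner rank is finite. A graph of finite corner rank $\alpha\ge2$ is of type 1 if some (equivalently every) vertex of rank $\alpha$ dominates $V(G^{(\alpha-1)})$, and of type 0 otherwise. The rank cardinality vector is $(x_\alpha,\dots,x_1)$ with $x_k=|X_k|$. A vector (finite list of positive integers) is 0-realizable if it is the rank cardinality vector of some cop-win graph of type 0. *)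

theory Defs
  imports Main
begin

definition refl_graph :: "'a set \<Rightarrow> ('a \<Rightarrow> 'a \<Rightarrow> bool) \<Rightarrow> bool" where
  "refl_graph V E \<longleftrightarrow> finite V \<and> V \<noteq> {} \<and> (\<forall>v\<in>V. E v v)
     \<and> (\<forall>v\<in>V. \<forall>w\<in>V. E v w \<longleftrightarrow> E w v)"

definition cnbhd :: "'a set \<Rightarrow> ('a \<Rightarrow> 'a \<Rightarrow> bool) \<Rightarrow> 'a \<Rightarrow> 'a set" where
  "cnbhd S E v = {w \<in> S. E v w}"

definition strict_corners :: "'a set \<Rightarrow> ('a \<Rightarrow> 'a \<Rightarrow> bool) \<Rightarrow> 'a set" where
  "strict_corners S E = {v \<in> S. \<exists>w\<in>S. w \<noteq> v \<and> cnbhd S E v \<subset> cnbhd S E w}"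

definition is_clique :: "'a set \<Rightarrow> ('a \<Rightarrow> 'a \<Rightarrow> bool) \<Rightarrow> bool" where
  "is_clique S E \<longleftrightarrow> (\<forall>v\<in>S. \<forall>w\<in>S. E v w)"

definition corner_step :: "('a \<Rightarrow> 'a \<Rightarrow> bool) \<Rightarrow> 'a set \<Rightarrow> 'a set" where
  "corner_step E S = (if is_clique S E \<or> strict_corners S E = {} then S else S - strict_corners S E)"

definition stage :: "'a set \<Rightarrow> ('a \<Rightarrow> 'a \<Rightarrow> bool) \<Rightarrow> nat \<Rightarrow> 'a set" where
  "stage V E k = (corner_step E ^^ (k - 1)) V"

definition cop_win :: "'a set \<Rightarrow> ('a \<Rightarrow> 'a \<Rightarrow> bool) \<Rightarrow> bool" where
  "cop_win V E \<longleftrightarrow> (\<exists>k\<ge>1. is_clique (stage V E k) E)"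

definition corner_rank :: "'a set \<Rightarrow> ('a \<Rightarrow> 'a \<Rightarrow> bool) \<Rightarrow> nat" where
  "corner_rank V E = (LEAST k. k \<ge> 1 \<and> is_clique (stage V E k) E)"

definition rank_set :: "'a set \<Rightarrow> ('a \<Rightarrow> 'a \<Rightarrow> bool) \<Rightarrow> nat \<Rightarrow> 'a set" where
  "rank_set V E k = (if k = corner_rank V E then stage V E k
                     else strict_corners (stage V E k) E)"

definition rank_card_vector :: "'a set \<Rightarrow> ('a \<Rightarrow> 'a \<Rightarrow> bool) \<Rightarrow> nat list" where
  "rank_card_vector V E = map (\<lambda>k. card (rank_set V E k)) (rev [1..<corner_rank V E + 1])"

definition type1 :: "'a set \<Rightarrow> ('a \<Rightarrow> 'a \<Rightarrow> bool) \<Rightarrow> bool" where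
  "type1 V E \<longleftrightarrow> corner_rank V E \<ge> 2 \<and>
     (\<exists>v\<in>rank_set V E (corner_rank V E). \<forall>w\<in>stage V E (corner_rank V E - 1). E v w)"

definition type0 :: "'a set \<Rightarrow> ('a \<Rightarrow> 'a \<Rightarrow> bool) \<Rightarrow> bool" where
  "type0 V E \<longleftrightarrow> corner_rank V E \<ge> 2 \<and> \<not> type1 V E"

text \<open>0-realizable: rank cardinality vector of some cop-win graph of type 0
  (vertices taken from nat; every finite graph is isomorphic to one on nat).\<close>
definition zero_realizable :: "nat list \<Rightarrow> bool" where
  "zero_realizable xs \<longleftrightarrow> (\<exists>(V::nat set) E. refl_graph V E \<and> cop_win V E \<and> type0 V E
       \<and> rank_card_vector V E = xs)"

end

theory Submission
  imports Defs
begin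


definition dmn :: "'a set \<Rightarrow> ('a \<Rightarrow> 'a \<Rightarrow> bool) \<Rightarrow> 'a \<Rightarrow> 'a \<Rightarrow> bool" where
  "dmn S E v w \<longleftrightarrow> (\<forall>t\<in>S. E v t \<longrightarrow> E w t) \<and> (\<exists>t\<in>S. E w t \<and> \<not> E v t)"

lemma dmnD: "dmn S E v w \<Longrightarrow> t \<in> S \<Longrightarrow> E v t \<Longrightarrow> E w t"
  unfolding dmn_def by blast

lemma dmn_cnbhd: "cnbhd S E v \<subset> cnbhd S E w \<longleftrightarrow> dmn S E v w"
  unfolding dmn_def cnbhd_def psubset_eq subset_iff set_eq_iff by auto

lemma sc_iff: "v \<in> strict_corners S E \<longleftrightarrow> v \<in> S \<and> (\<exists>w\<in>S. w \<noteq> v \<and> dmn S E v w)"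
  unfolding strict_corners_def dmn_cnbhd by simp

lemma lift: "dmn S3 E c w \<Longrightarrow> S3 \<subseteq> S2 \<Longrightarrow> (\<And>u. u \<in> S2 - S3 \<Longrightarrow> E c u \<Longrightarrow> E w u) \<Longrightarrow> dmn S2 E c w"
  unfolding dmn_def by blast

lemma wit: "dmn S3 E c w \<Longrightarrow> S3 \<subseteq> S2 \<Longrightarrow> \<not> dmn S2 E c w \<Longrightarrow> \<exists>u\<in>S2 - S3. E c u \<and> \<not> E w u"
  by (meson lift)

lemma maxdom:
  assumes fin: "finite S" and v: "v \<in> strict_corners S E"
  shows "\<exists>w\<in>S - strict_corners S E. dmn S E v w"
proof -
  let ?W = "{w\<in>S. dmn S E v w}"
  let ?f = "\<lambda>w. card (cnbhd S E w)"
  have ne: "?W \<noteq> {}" using v unfolding sc_iff by auto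
  have fW: "finite ?W" using fin by simp
  have "Max (?f ` ?W) \<in> ?f ` ?W" using ne fW by (intro Max_in) auto
  then obtain w where w: "w \<in> ?W" and wm: "?f w = Max (?f ` ?W)" by auto
  have mx: "?f w' \<le> ?f w" if "w' \<in> ?W" for w' using wm that fW by simp
  have "w \<notin> strict_corners S E"
  proof
    assume "w \<in> strict_corners S E"
    then obtain w' where w': "w' \<in> S" "dmn S E w w'" unfolding sc_iff by auto
    then have sub: "cnbhd S E w \<subset> cnbhd S E w'" using dmn_cnbhd by metis
    have "dmn S E v w'" using w w'(2) unfolding dmn_def by auto
    then have "?f w' \<le> ?f w" using mx w'(1) by simp
    moreover have "?f w < ?f w'" using sub fin by (intro psubset_card_mono) (auto simp: cnbhd_def)
    ultimately show False by simp
  qed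
  then show ?thesis using w by auto
qed




lemma core_a:
  assumes fin: "finite S2"
  and sym: "\<And>v w. v \<in> S2 \<Longrightarrow> w \<in> S2 \<Longrightarrow> E v w = E w v"
  and refl: "\<And>v. v \<in> S2 \<Longrightarrow> E v v"
  and S3: "S3 \<subseteq> S2" and aS: "a \<in> S3" and bS: "b \<in> S3" and ab: "a \<noteq> b" and Eab: "E a b"
  and hD: "\<And>u. u \<in> S2 - S3 \<Longrightarrow> \<exists>w\<in>S3. dmn S2 E u w"
  and hN: "\<And>c w. c \<in> S3 \<Longrightarrow> w \<in> S2 \<Longrightarrow> w \<noteq> c \<Longrightarrow> \<not> dmn S2 E c w"
  and hC: "\<And>c. c \<in> S3 \<Longrightarrow> c \<noteq> a \<Longrightarrow> c \<noteq> b \<Longrightarrow> dmn S3 E c a \<or> dmn S3 E c b"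
  and pS: "p \<in> S3" and nap: "\<not> E a p"
  and qS: "q \<in> S3" and nbq: "\<not> E b q"
  and zS: "z \<in> S3" and za: "z \<noteq> a" and zb: "z \<noteq> b"
  and hz: "\<And>u. u \<in> S2 - S3 \<Longrightarrow> E z u"
  and dza: "dmn S3 E z a"
  and card: "card (S3 - {a,b}) = 4 \<or> (card (S3 - {a,b}) = 5 \<and> card (S2 - S3) = 2)"
  shows False
proof -
  have in2: "\<And>v. v \<in> S3 \<Longrightarrow> v \<in> S2" using S3 by blast
  have Eba: "E b a" using sym in2 aS bS Eab by blast
  have pa: "p \<noteq> a" using nap refl in2 aS by blast
  have pb: "p \<noteq> b" using nap Eab by blast
  have dpb: "dmn S3 E p b"
    using hC[OF pS pa pb] dmnD[of S3 E p a p] pS refl in2 nap by blast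
  have nzp: "\<not> E z p" using dmnD[OF dza pS] nap by blast
  have Ebp: "E b p" using dmnD[OF dpb pS] refl in2 pS by blast
  have "\<not> dmn S2 E p b" using hN pS bS in2 pb by blast
  then obtain u where uD: "u \<in> S2 - S3" and Epu: "E p u" and nbu: "\<not> E b u"
    using wit[OF dpb S3] by blast
  obtain r where rS: "r \<in> S3" and dur: "dmn S2 E u r" using hD uD by blast
  have Eru: "E r u" using dmnD[OF dur] uD refl by blast
  have Euz: "E u z" using hz[OF uD] sym uD zS in2 by blast
  have Erz: "E r z" using dmnD[OF dur] Euz zS in2 by blast
  have Eup: "E u p" using Epu sym uD pS in2 by blast
  have Erp: "E r p" using dmnD[OF dur] Eup pS in2 by blast
  have rz: "r \<noteq> z" using Erp nzp by blast
  have rp: "r \<noteq> p" using Erz nzp sym pS zS in2 by blast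
  have ra: "r \<noteq> a" using Erp nap by blast
  have rb: "r \<noteq> b" using Eru nbu by blast
  have Ezr: "E z r" using Erz sym rS zS in2 by blast
  have Ear: "E a r" using dmnD[OF dza rS Ezr] .
  have drb: "dmn S3 E r b"
    using hC[OF rS ra rb] dmnD[of S3 E r a p] pS Erp nap by blast
  have Ebz: "E b z" using dmnD[OF drb zS Erz] .
  have Ebr: "E b r" using dmnD[OF drb rS] refl rS in2 by blast
  have qb: "q \<noteq> b" using nbq refl qS in2 by blast
  have qa: "q \<noteq> a" using nbq Eba by blast
  have dqa: "dmn S3 E q a"
    using hC[OF qS qa qb] dmnD[of S3 E q b q] qS refl in2 nbq by blast
  have Eaq: "E a q" using dmnD[OF dqa qS] refl in2 qS by blast
  have qz: "q \<noteq> z" using Ebz nbq by blast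
  have qp: "q \<noteq> p" using Ebp nbq by blast
  have qr: "q \<noteq> r" using Ebr nbq by blast
  have nrq: "\<not> E r q" using dmnD[OF drb qS] nbq by blast
  have "\<not> dmn S2 E q a" using hN qS aS in2 qa by blast
  then obtain u2 where u2D: "u2 \<in> S2 - S3" and Equ2: "E q u2" and nau2: "\<not> E a u2"
    using wit[OF dqa S3] by blast
  obtain w2 where w2S: "w2 \<in> S3" and dw2: "dmn S2 E u2 w2" using hD u2D by blast
  have Eu2q: "E u2 q" using Equ2 sym u2D qS in2 by blast
  have Ew2q: "E w2 q" using dmnD[OF dw2] Eu2q qS in2 by blast
  have Eu2z: "E u2 z" using hz[OF u2D] sym u2D zS in2 by blast
  have Ew2z: "E w2 z" using dmnD[OF dw2] Eu2z zS in2 by blast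
  have Ew2u2: "E w2 u2" using dmnD[OF dw2] u2D refl by blast
  have w2a: "w2 \<noteq> a" using Ew2u2 nau2 by blast
  have w2b: "w2 \<noteq> b" using Ew2q nbq by blast
  have w2p: "w2 \<noteq> p" using Ew2z nzp sym pS zS in2 by blast
  have w2r: "w2 \<noteq> r" using Ew2q nrq by blast
  have Eaz: "E a z" using dmnD[OF dza zS] refl zS in2 by blast
  have Eza: "E z a" using Eaz sym zS aS in2 by blast
  have Ezb: "E z b" using Ebz sym zS bS in2 by blast
  have Ezz: "E z z" using refl zS in2 by blast
  let ?C = "S3 - {a,b}"
  have finC: "finite ?C" using fin S3 finite_subset by blast
  have sub4: "{z,p,r,q} \<subseteq> ?C" using zS pS rS qS za zb pa pb ra rb qa qb by blast
  have zp: "z \<noteq> p" using nzp Ezz by blast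
  have c4: "card {z,p,r,q} = 4" using rz rp qz qp qr zp by auto
  from card show False
  proof
    assume c: "card ?C = 4"
    have Ceq: "?C = {z,p,r,q}" using card_subset_eq[OF finC sub4] c c4 by simp
    have S3eq: "S3 = {a,b,z,p,r,q}" using Ceq aS bS by blast
    have "w2 \<in> {z,q}" using w2S S3eq w2a w2b w2p w2r by blast
    then have Ezq: "E z q" using Ew2q Ew2z sym qS zS in2 by blast
    obtain t where tS: "t \<in> S3" and Eat: "E a t" and nzt: "\<not> E z t"
      using dza unfolding dmn_def by blast
    show False using tS S3eq Eat nzt Eza Ezb Ezz nap Ezr Ezq by blast
  next
    assume c: "card ?C = 5 \<and> card (S2 - S3) = 2"
    have "card (?C - {z,p,r,q}) = 1" using c c4 sub4 finC by (simp add: card_Diff_subset)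
    then obtain t where t: "?C - {z,p,r,q} = {t}" using card_1_singletonE by blast
    have S3eq: "S3 = {a,b,z,p,r,q,t}" using t sub4 aS bS by blast
    have tS: "t \<in> S3" and ta: "t \<noteq> a" and tb: "t \<noteq> b" using t by blast+
    have uu2: "u \<noteq> u2"
    proof
      assume "u = u2"
      then have "E r q" using dmnD[OF dur] Eu2q qS in2 by blast
      then show False using nrq by blast
    qed
    have finD: "finite (S2 - S3)" using fin by simp
    have Deq: "S2 - S3 = {u,u2}"
      using card_subset_eq[OF finD, of "{u,u2}"] uD u2D uu2 c by auto
    have Epq: "\<not> E p q" using dmnD[OF dpb qS] nbq by blast
    show False
    proof (cases "E p t")
      case False
      have dpr: "dmn S3 E p r"
        unfolding dmn_def
      proof
        show "\<forall>s\<in>S3. E p s \<longrightarrow> E r s"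
          using S3eq nap sym pS aS in2 Ebr sym rS bS nzp zS Erp Epq False refl by auto
        show "\<exists>s\<in>S3. E r s \<and> \<not> E p s" using aS Ear sym rS in2 nap pS by blast
      qed
      have "\<not> dmn S2 E p r" using hN pS rS in2 rp by blast
      then obtain v where vD: "v \<in> S2 - S3" and Epv: "E p v" and nrv: "\<not> E r v"
        using wit[OF dpr S3] by blast
      have "v \<in> {u,u2}" using vD Deq by simp
      then have "v = u2" using nrv Eru by auto
      then have "E w2 p" using dmnD[OF dw2] Epv sym vD pS in2 by blast
      moreover have "w2 \<in> {z,q,t}" using w2S S3eq w2a w2b w2p w2r by blast
      ultimately show False using nzp Epq False sym pS qS tS in2 by blast
    next
      case True
      have Ebt: "E b t" using dmnD[OF dpb tS True] .
      have Etp: "E t p" using True sym pS tS in2 by blast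
      have dtb: "dmn S3 E t b" using hC[OF tS ta tb] dmnD[of S3 E t a p] pS Etp nap by blast
      have ntq: "\<not> E t q" using dmnD[OF dtb qS] nbq by blast
      have "w2 \<noteq> t" using Ew2q ntq by blast
      then have "w2 \<in> {z,q}" using w2S S3eq w2a w2b w2p w2r by blast
      then have Ezq: "E z q" using Ew2q Ew2z sym qS zS in2 by blast
      have nqt: "\<not> E q t" using ntq sym qS tS in2 by blast
      have nqr: "\<not> E q r" using nrq sym qS rS in2 by blast
      have nqb: "\<not> E q b" using nbq sym qS bS in2 by blast
      have nqp: "\<not> E q p" using Epq sym qS pS in2 by blast
      have dqz: "dmn S3 E q z"
        unfolding dmn_def
      proof
        show "\<forall>s\<in>S3. E q s \<longrightarrow> E z s"
          using S3eq Eza nqb Ezz nqp nqr Ezq nqt by auto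
        show "\<exists>s\<in>S3. E z s \<and> \<not> E q s" using bS Ezb nqb by blast
      qed
      have "dmn S2 E q z" using lift[OF dqz S3] hz by blast
      then show False using hN qS zS in2 qz by blast
    qed
  qed
qed




lemma core:
  assumes fin: "finite S2"
  and sym: "\<And>v w. v \<in> S2 \<Longrightarrow> w \<in> S2 \<Longrightarrow> E v w = E w v"
  and refl: "\<And>v. v \<in> S2 \<Longrightarrow> E v v"
  and S3: "S3 \<subseteq> S2" and aS: "a \<in> S3" and bS: "b \<in> S3" and ab: "a \<noteq> b" and Eab: "E a b"
  and hD: "\<And>u. u \<in> S2 - S3 \<Longrightarrow> \<exists>w\<in>S3. dmn S2 E u w"
  and hN: "\<And>c w. c \<in> S3 \<Longrightarrow> w \<in> S2 \<Longrightarrow> w \<noteq> c \<Longrightarrow> \<not> dmn S2 E c w"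
  and hC: "\<And>c. c \<in> S3 \<Longrightarrow> c \<noteq> a \<Longrightarrow> c \<noteq> b \<Longrightarrow> dmn S3 E c a \<or> dmn S3 E c b"
  and pS: "p \<in> S3" and nap: "\<not> E a p"
  and qS: "q \<in> S3" and nbq: "\<not> E b q"
  and zS: "z \<in> S3"
  and hz: "\<And>u. u \<in> S2 - S3 \<Longrightarrow> E z u"
  and card: "card (S3 - {a,b}) = 4 \<or> (card (S3 - {a,b}) = 5 \<and> card (S2 - S3) = 2)"
  shows False
proof -
  have in2: "\<And>v. v \<in> S3 \<Longrightarrow> v \<in> S2" using S3 by blast
  have Eba: "E b a" using sym in2 aS bS Eab by blast
  have pa: "p \<noteq> a" using nap refl in2 aS by blast
  have pb: "p \<noteq> b" using nap Eab by blast
  have dpb: "dmn S3 E p b"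
    using hC[OF pS pa pb] dmnD[of S3 E p a p] pS refl in2 nap by blast
  have qb: "q \<noteq> b" using nbq refl qS in2 by blast
  have qa: "q \<noteq> a" using nbq Eba by blast
  have dqa: "dmn S3 E q a"
    using hC[OF qS qa qb] dmnD[of S3 E q b q] qS refl in2 nbq by blast
  have za: "z \<noteq> a"
  proof
    assume "z = a"
    then have "dmn S2 E q a" using lift[OF dqa S3] hz by blast
    then show False using hN qS aS in2 qa by blast
  qed
  have zb: "z \<noteq> b"
  proof
    assume "z = b"
    then have "dmn S2 E p b" using lift[OF dpb S3] hz by blast
    then show False using hN pS bS in2 pb by blast
  qed
  from hC[OF zS za zb] show False
  proof
    assume "dmn S3 E z a"
    then show False using core_a[OF fin sym refl S3 aS bS ab Eab hD hN hC pS nap qS nbq zS za zb hz _ card] by blast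
  next
    assume d: "dmn S3 E z b"
    have Eba: "E b a" using sym in2 aS bS Eab by blast
    have hC': "\<And>c. c \<in> S3 \<Longrightarrow> c \<noteq> b \<Longrightarrow> c \<noteq> a \<Longrightarrow> dmn S3 E c b \<or> dmn S3 E c a"
      using hC by blast
    have card': "card (S3 - {b,a}) = 4 \<or> (card (S3 - {b,a}) = 5 \<and> card (S2 - S3) = 2)"
      using card by (metis insert_commute)
    show False using core_a[OF fin sym refl S3 bS aS ab[symmetric] Eba hD hN hC' qS nbq pS nap zS zb za hz d card'] by blast
  qed
qed

lemma sc_in: "v \<in> strict_corners S E \<Longrightarrow> v \<in> S"
  unfolding strict_corners_def by simp

lemma zexists:
  assumes fin: "finite V"
  and sym: "\<And>v w. v \<in> V \<Longrightarrow> w \<in> V \<Longrightarrow> E v w = E w v"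
  and scV: "strict_corners V E = {x}"
  shows "\<exists>z\<in>(V - {x}) - strict_corners (V - {x}) E. \<forall>u\<in>strict_corners (V - {x}) E. E z u"
proof -
  let ?S2 = "V - {x}"
  let ?D = "strict_corners ?S2 E"
  have xsc: "x \<in> strict_corners V E" using scV by simp
  then obtain y where yV: "y \<in> V" and yx: "y \<noteq> x" and dxy: "dmn V E x y"
    unfolding sc_iff by auto
  have xV: "x \<in> V" using sc_in[OF xsc] .
  have Evx: "E v x" if vD: "v \<in> ?D" for v
  proof (rule ccontr)
    assume nvx: "\<not> E v x"
    obtain w where wS: "w \<in> ?S2" "w \<noteq> v" and dvw: "dmn ?S2 E v w" using vD unfolding sc_iff by auto
    have vS2: "v \<in> ?S2" using sc_in[OF vD] .
    have "dmn V E v w" using dvw nvx unfolding dmn_def by auto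
    then have "v \<in> strict_corners V E" unfolding sc_iff using vS2 wS by auto
    then show False using scV vS2 by simp
  qed
  have Eyv: "E y v" if vD: "v \<in> ?D" for v
  proof -
    have vV: "v \<in> V" using sc_in[OF vD] by simp
    have "E x v" using Evx[OF vD] sym[OF vV xV] by simp
    then show ?thesis using dmnD[OF dxy vV] by simp
  qed
  have yS2: "y \<in> ?S2" using yV yx by simp
  show ?thesis
  proof (cases "y \<in> ?D")
    case False
    then show ?thesis using yS2 Eyv by auto
  next
    case True
    have "finite ?S2" using fin by simp
    then obtain w where wS: "w \<in> ?S2 - ?D" and dyw: "dmn ?S2 E y w" using maxdom True by metis
    have "E w v" if vD: "v \<in> ?D" for v
      using dmnD[OF dyw sc_in[OF vD] Eyv[OF vD]] .
    then show ?thesis using wS by auto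
  qed
qed




lemma stage_Suc: "k \<ge> 1 \<Longrightarrow> stage V E (Suc k) = corner_step E (stage V E k)"
  unfolding stage_def by (cases k) auto

lemma step_eq: "\<not> is_clique S E \<Longrightarrow> strict_corners S E \<noteq> {} \<Longrightarrow> corner_step E S = S - strict_corners S E"
  unfolding corner_step_def by simp

lemma sc_sub: "strict_corners S E \<subseteq> S" unfolding strict_corners_def by blast

lemma main_false:
  assumes rg: "refl_graph V E" and cw: "cop_win V E" and t0: "type0 V E"
  and vec: "rank_card_vector V E = [n4, n3, n2, n1]"
  and n4: "n4 = 2" and n1: "n1 = 1" and n2: "n2 \<ge> 1"
  and n3: "n3 = 4 \<or> (n3 = 5 \<and> n2 = 2)"
  shows False
proof -
  let ?r = "corner_rank V E"
  have "length (rank_card_vector V E) = ?r" unfolding rank_card_vector_def by simp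
  then have r4: "?r = 4" using vec by simp
  have "rev [1..<?r + 1] = [4,3,2,1]" using r4 by (simp add: upt_rec)
  then have vec2: "[card (rank_set V E 4), card (rank_set V E 3), card (rank_set V E 2), card (rank_set V E 1)] = [n4,n3,n2,n1]"
    using vec unfolding rank_card_vector_def by simp
  let ?P = "\<lambda>k. k \<ge> 1 \<and> is_clique (stage V E k) E"
  have rl: "?r = (LEAST k. ?P k)" unfolding corner_rank_def by simp
  have ex: "\<exists>k. ?P k" using cw unfolding cop_win_def by blast
  have cl4: "is_clique (stage V E 4) E" using LeastI_ex[OF ex] rl r4 by simp
  have ncl: "\<not> is_clique (stage V E k) E" if "1 \<le> k" "k < 4" for k
    using not_less_Least[of k ?P] that rl r4 by simp
  have rs4: "rank_set V E 4 = stage V E 4" unfolding rank_set_def using r4 by simp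
  have rsk: "rank_set V E k = strict_corners (stage V E k) E" if "k < 4" for k
    unfolding rank_set_def using r4 that by simp
  have s1: "stage V E 1 = V" unfolding stage_def by simp
  have fin: "finite V" and sym: "\<And>v w. v \<in> V \<Longrightarrow> w \<in> V \<Longrightarrow> E v w = E w v"
    and refl: "\<And>v. v \<in> V \<Longrightarrow> E v v" using rg unfolding refl_graph_def by blast+
  have c1: "card (strict_corners V E) = 1" using vec2 rsk[of 1] s1 n1 by simp
  then obtain x where scV: "strict_corners V E = {x}" using card_1_singletonE by blast
  let ?S2 = "V - {x}"
  have s2: "stage V E 2 = ?S2"
    using stage_Suc[of 1 V E] step_eq[of V E] ncl[of 1] s1 scV by (simp add: numeral_2_eq_2)
  let ?D = "strict_corners ?S2 E"
  let ?S3 = "?S2 - ?D"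
  have c2: "card ?D = n2" using vec2 rsk[of 2] s2 by simp
  have Dne: "?D \<noteq> {}" using c2 n2 by (metis card.empty not_one_le_zero)
  have s3: "stage V E 3 = ?S3"
    using stage_Suc[of 2 V E] step_eq[of ?S2 E] ncl[of 2] s2 Dne by (simp add: numeral_3_eq_3)
  let ?C = "strict_corners ?S3 E"
  have c3: "card ?C = n3" using vec2 rsk[of 3] s3 by simp
  have Cne: "?C \<noteq> {}" using c3 n3 by auto
  have s4: "stage V E 4 = ?S3 - ?C"
    using stage_Suc[of 3 V E] step_eq[of ?S3 E] ncl[of 3] s3 Cne by (simp add: eval_nat_numeral)
  have "card (?S3 - ?C) = 2" using vec2 rs4 s4 n4 by simp
  then obtain a b where ab: "a \<noteq> b" and S4: "?S3 - ?C = {a,b}" by (meson card_2_iff)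
  have Eab: "E a b" using cl4 s4 S4 unfolding is_clique_def by blast
  have nt1: "\<not> (\<exists>v\<in>?S3 - ?C. \<forall>w\<in>?S3. E v w)"
    using t0 r4 rs4 s4 s3 unfolding type0_def type1_def by simp
  then obtain p where pS: "p \<in> ?S3" and nap: "\<not> E a p" using S4 by blast
  obtain q where qS: "q \<in> ?S3" and nbq: "\<not> E b q" using nt1 S4 by blast
  obtain z where zS: "z \<in> ?S3" and hz0: "\<forall>u\<in>?D. E z u"
    using zexists[OF fin sym scV] by blast
  have finS2: "finite ?S2" using fin by simp
  have D: "?S2 - ?S3 = ?D" using sc_sub[of ?S2 E] by blast
  have CC: "?S3 - {a,b} = ?C" using S4 sc_sub[of ?S3 E] by blast
  have a3: "a \<in> ?S3" and b3: "b \<in> ?S3" using S4 by auto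
  have hC: "dmn ?S3 E c a \<or> dmn ?S3 E c b" if "c \<in> ?S3" "c \<noteq> a" "c \<noteq> b" for c
  proof -
    have "c \<in> ?C" using S4 that by auto
    then obtain w where w: "w \<in> ?S3 - ?C" "dmn ?S3 E c w" using maxdom[of ?S3 c E] finS2 by auto
    then have "w = a \<or> w = b" using S4 by auto
    then show ?thesis using w(2) by auto
  qed
  have hD: "\<exists>w\<in>?S3. dmn ?S2 E u w" if "u \<in> ?S2 - ?S3" for u
  proof -
    have "u \<in> ?D" using that D by simp
    then show ?thesis using maxdom[OF finS2] by metis
  qed
  have hN: "\<not> dmn ?S2 E c w" if "c \<in> ?S3" "w \<in> ?S2" "w \<noteq> c" for c w
  proof
    assume "dmn ?S2 E c w"
    then have "c \<in> ?D" unfolding sc_iff using that by auto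
    then show False using that by simp
  qed
  have hz: "E z u" if "u \<in> ?S2 - ?S3" for u
    using hz0 that D by simp
  have sym2: "E v w = E w v" if "v \<in> ?S2" "w \<in> ?S2" for v w using sym that by simp
  have refl2: "E v v" if "v \<in> ?S2" for v using refl that by simp
  have sub: "?S3 \<subseteq> ?S2" by auto
  have cd: "card (?S3 - {a,b}) = 4 \<or> (card (?S3 - {a,b}) = 5 \<and> card (?S2 - ?S3) = 2)"
    using CC D c3 c2 n3 by simp
  show False
    by (rule core[of ?S2 E ?S3 a b p q z, OF finS2 sym2 refl2 sub a3 b3 ab Eab hD hN hC pS nap qS nbq zS hz cd])
qed


theorem theorem3p26:
  shows "(\<forall>k::nat. k \<ge> 1 \<longrightarrow> \<not> zero_realizable [2, 4, k, 1])
         \<and> \<not> zero_realizable [2, 5, 2, 1]"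
proof
  show "\<forall>k::nat. k \<ge> 1 \<longrightarrow> \<not> zero_realizable [2, 4, k, 1]"
  proof (intro allI impI notI)
    fix k :: nat assume k: "k \<ge> 1" and zr: "zero_realizable [2, 4, k, 1]"
    then obtain V :: "nat set" and E where h: "refl_graph V E" "cop_win V E" "type0 V E"
        "rank_card_vector V E = [2, 4, k, 1]"
      unfolding zero_realizable_def by blast
    show False by (rule main_false[OF h(1) h(2) h(3) h(4)]) (use k in simp_all)
  qed
  show "\<not> zero_realizable [2, 5, 2, 1]"
  proof
    assume "zero_realizable [2, 5, 2, 1]"
    then obtain V :: "nat set" and E where h: "refl_graph V E" "cop_win V E" "type0 V E"
        "rank_card_vector V E = [2, 5, 2, 1]"
      unfolding zero_realizable_def by blast
    show False by (rule main_false[OF h(1) h(2) h(3) h(4)]) simp_all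
  qed
qed

end
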